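(* Let $1<p<\infty$, let $u$ be a weight on $\mathbb R$ and let $w\in B_{p,\infty}$ be a weight on $(0,\infty)$. Then, with constants independent of $E$, for every measurable set $E\subset\mathbb R$, $$\|\chi_E\|_{(\Lambda^{p,\infty}_u(w))'}\approx\frac{u(E)}{W^{1/p}(u(E))}.$$
   Context: A weight $u$ on $\mathbb R$ is locally integrable with $u>0$ a.e.; $u(E)=\int_Eu$. A weight $w$ on $(0,\infty)$ is nonnegative locally integrable, $W(t)=\int_0^tw$. $f^*_u(t)=\inf\{y>0:u(\{|f|>y\})\le t\}$; $\|f\|_{\Lambda^{p,\infty}_u(w)}=\sup_{t>0}f^*_u(t)W(t)^{1/p}$. The associate space $(\Lambda^{p,\infty}_u(w))'$ consists of measurable $g$ with $\|g\|_{(\Lambda^{p,\infty}_u(w))'}=\sup\left\{\left|\int_{\mathbb R}fgu\right|/\|f\|_{\Lambda^{p,\infty}_u(w)}: f\in\Lambda^{p,\infty}_u(w)\right\}<\infty$. $w\in B_{p,\infty}$ means that the Hardy operator $Pf(t)=\frac1t\int_0^tf(s)\,ds$ satisfies $\sup_{\lambda>0}\lambda\left(\int_{\{Pf>\lambda\}}w\right)^{1/p}\le C\left(\int_0^\infty f^pw\right)^{1/p}$ for all nonnegative decreasing $f$ on $(0,\infty)$. $A\approx B$ means $C^{-1}B\le A\le CB$. *)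

theory Defs
  imports "HOL-Analysis.Analysis"
begin

definition enn_powr :: "ennreal \<Rightarrow> real \<Rightarrow> ennreal" where
  "enn_powr x a = (if x = top then top else ennreal (enn2real x powr a))"

definition weight_R :: "(real \<Rightarrow> real) \<Rightarrow> bool" where
  "weight_R u \<longleftrightarrow> u \<in> borel_measurable lebesgue
     \<and> (\<forall>K. compact K \<longrightarrow> set_integrable lebesgue K u)
     \<and> (AE x in lebesgue. 0 < u x)"

definition weight_pos :: "(real \<Rightarrow> real) \<Rightarrow> bool" where
  "weight_pos w \<longleftrightarrow> (\<forall>t>0. 0 \<le> w t) \<and> (\<forall>t>0. set_integrable lebesgue {0<..t} w)"

definition umeas :: "(real \<Rightarrow> real) \<Rightarrow> real set \<Rightarrow> ennreal" where
  "umeas u E = (\<integral>\<^sup>+ x\<in>E. ennreal (u x) \<partial>lebesgue)"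

definition Wfun :: "(real \<Rightarrow> real) \<Rightarrow> real \<Rightarrow> real" where
  "Wfun w t = (LINT s:{0<..t}|lebesgue. w s)"

definition rearr :: "(real \<Rightarrow> real) \<Rightarrow> (real \<Rightarrow> real) \<Rightarrow> real \<Rightarrow> ennreal" where
  "rearr u f t = Inf (ennreal ` {y::real. y > 0 \<and> umeas u {x. \<bar>f x\<bar> > y} \<le> ennreal t})"

definition lorentz_norm :: "real \<Rightarrow> (real \<Rightarrow> real) \<Rightarrow> (real \<Rightarrow> real) \<Rightarrow> (real \<Rightarrow> real) \<Rightarrow> ennreal" where
  "lorentz_norm p u w f = (SUP t\<in>{0<..}. rearr u f t * ennreal (Wfun w t powr (1/p)))"

definition in_lorentz :: "real \<Rightarrow> (real \<Rightarrow> real) \<Rightarrow> (real \<Rightarrow> real) \<Rightarrow> (real \<Rightarrow> real) \<Rightarrow> bool" where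
  "in_lorentz p u w f \<longleftrightarrow> f \<in> borel_measurable lebesgue \<and> lorentz_norm p u w f < top"

definition assoc_norm :: "real \<Rightarrow> (real \<Rightarrow> real) \<Rightarrow> (real \<Rightarrow> real) \<Rightarrow> (real \<Rightarrow> real) \<Rightarrow> ennreal" where
  "assoc_norm p u w g = (SUP f\<in>{f. in_lorentz p u w f \<and> lorentz_norm p u w f \<noteq> 0}.
      (if integrable lebesgue (\<lambda>x. f x * g x * u x)
       then ennreal \<bar>\<integral>x. f x * g x * u x \<partial>lebesgue\<bar> / lorentz_norm p u w f
       else top))"

definition hardyP :: "(real \<Rightarrow> real) \<Rightarrow> real \<Rightarrow> ennreal" where
  "hardyP f t = ennreal (1 / t) * (\<integral>\<^sup>+ s\<in>{0<..t}. ennreal (f s) \<partial>lebesgue)"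

definition B_p_infty :: "real \<Rightarrow> (real \<Rightarrow> real) \<Rightarrow> bool" where
  "B_p_infty p w \<longleftrightarrow> (\<exists>C. \<forall>f. (\<forall>t>0. 0 \<le> f t) \<and> antimono_on {0<..} f \<longrightarrow>
      (\<forall>lam>0. ennreal lam * enn_powr (\<integral>\<^sup>+ t\<in>{t. t > 0 \<and> hardyP f t > ennreal lam}. ennreal (w t) \<partial>lebesgue) (1/p)
        \<le> ennreal C * enn_powr (\<integral>\<^sup>+ t\<in>{0<..}. ennreal (f t powr p * w t) \<partial>lebesgue) (1/p)))"

end

theory Submission
  imports Defs
begin

lemma W_eq:
  assumes "weight_pos w" "0 < t"
  shows "(\<integral>\<^sup>+x\<in>{0<..t}. ennreal (w x) \<partial>lebesgue) = ennreal (Wfun w t)"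
    and "0 \<le> Wfun w t"
proof -
  have int: "integrable lebesgue (\<lambda>x. indicator {0<..t} x * w x)"
    using assms unfolding weight_pos_def set_integrable_def by auto
  have nn: "AE x in lebesgue. 0 \<le> indicator {0<..t} x * w x"
    using assms unfolding weight_pos_def by (auto simp: indicator_def)
  have "(\<integral>\<^sup>+x\<in>{0<..t}. ennreal (w x) \<partial>lebesgue) = (\<integral>\<^sup>+x. ennreal (indicator {0<..t} x * w x) \<partial>lebesgue)"
    by (intro nn_integral_cong) (auto simp: indicator_def)
  also have "\<dots> = ennreal (\<integral>x. indicator {0<..t} x * w x \<partial>lebesgue)"
    by (rule nn_integral_eq_integral[OF int nn])
  also have "(\<integral>x. indicator {0<..t} x * w x \<partial>lebesgue) = Wfun w t"
    unfolding Wfun_def set_lebesgue_integral_def by simp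
  finally show "(\<integral>\<^sup>+x\<in>{0<..t}. ennreal (w x) \<partial>lebesgue) = ennreal (Wfun w t)" .
  show "0 \<le> Wfun w t"
    unfolding Wfun_def set_lebesgue_integral_def using integral_nonneg_AE[OF nn] by simp
qed

lemma W_mono:
  assumes "weight_pos w" "0 < a" "a \<le> b"
  shows "Wfun w a \<le> Wfun w b"
proof -
  have "ennreal (Wfun w a) \<le> ennreal (Wfun w b)"
    unfolding W_eq(1)[OF assms(1,2), symmetric] W_eq(1)[OF assms(1), of b, symmetric, OF order.strict_trans2[OF assms(2,3)]]
    using assms by (intro nn_integral_mono) (auto simp: indicator_def)
  then show ?thesis using W_eq(2)[OF assms(1), of b] assms by simp
qed

lemma umeas_mono: "A \<subseteq> B \<Longrightarrow> umeas u A \<le> umeas u B"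
  unfolding umeas_def by (intro nn_integral_mono) (auto simp: indicator_def)

lemma enn_powr_mono: "x \<le> y \<Longrightarrow> 0 < a \<Longrightarrow> enn_powr x a \<le> enn_powr y a"
  unfolding enn_powr_def
  apply (cases "y = top"; cases "x = top")
  apply (auto simp: top_unique)
  apply (intro ennreal_leI powr_mono2)
  apply (auto intro!: enn2real_mono simp: top.not_eq_extremum)
  done

lemma enn_powr_ennreal: "0 \<le> x \<Longrightarrow> enn_powr (ennreal x) a = ennreal (x powr a)"
  unfolding enn_powr_def by simp

lemma Bp_use:
  assumes Bp: "B_p_infty p w" and wp: "weight_pos w" and p: "1 < p"
  obtains C where "C > 0" and "\<And>f lam a B. (\<forall>t>0. 0 \<le> f t) \<Longrightarrow> antimono_on {0<..} f \<Longrightarrow> 0 < lam \<Longrightarrow> 0 < a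
     \<Longrightarrow> (\<forall>t\<in>{0<..a}. hardyP f t > ennreal lam) \<Longrightarrow> 0 \<le> B
     \<Longrightarrow> (\<integral>\<^sup>+t\<in>{0<..}. ennreal (f t powr p * w t) \<partial>lebesgue) \<le> ennreal B
     \<Longrightarrow> lam * Wfun w a powr (1/p) \<le> C * B powr (1/p)"
proof -
  from Bp obtain C0 where C0: "\<And>f. (\<forall>t>0. 0 \<le> f t) \<and> antimono_on {0<..} f \<longrightarrow>
      (\<forall>lam>0. ennreal lam * enn_powr (\<integral>\<^sup>+ t\<in>{t. t > 0 \<and> hardyP f t > ennreal lam}. ennreal (w t) \<partial>lebesgue) (1/p)
        \<le> ennreal C0 * enn_powr (\<integral>\<^sup>+ t\<in>{0<..}. ennreal (f t powr p * w t) \<partial>lebesgue) (1/p))"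
    unfolding B_p_infty_def by blast
  define C where "C = max C0 1"
  have "C > 0" unfolding C_def by simp
  moreover have "lam * Wfun w a powr (1/p) \<le> C * B powr (1/p)"
    if f: "\<forall>t>0. 0 \<le> f t" "antimono_on {0<..} f" and lam: "0 < lam" and a: "0 < a"
      and lev: "\<forall>t\<in>{0<..a}. hardyP f t > ennreal lam" and B: "0 \<le> B"
      and I: "(\<integral>\<^sup>+t\<in>{0<..}. ennreal (f t powr p * w t) \<partial>lebesgue) \<le> ennreal B"
    for f lam a B
  proof -
    have p0: "0 < 1/p" using p by simp
    have Wn: "0 \<le> Wfun w a" using W_eq(2)[OF wp a] .
    have lv: "ennreal (Wfun w a) \<le> (\<integral>\<^sup>+ t\<in>{t. t > 0 \<and> hardyP f t > ennreal lam}. ennreal (w t) \<partial>lebesgue)"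
      unfolding W_eq(1)[OF wp a, symmetric] using lev
      by (intro nn_integral_mono) (auto simp: indicator_def)
    then have "ennreal (lam * Wfun w a powr (1/p)) \<le> ennreal lam * enn_powr (\<integral>\<^sup>+ t\<in>{t. t > 0 \<and> hardyP f t > ennreal lam}. ennreal (w t) \<partial>lebesgue) (1/p)"
    proof -
      have "ennreal (lam * Wfun w a powr (1/p)) = ennreal lam * enn_powr (ennreal (Wfun w a)) (1/p)"
        using Wn lam by (simp add: enn_powr_ennreal ennreal_mult)
      then show ?thesis using enn_powr_mono[OF lv p0] by (simp add: mult_left_mono)
    qed
    also have "\<dots> \<le> ennreal C0 * enn_powr (\<integral>\<^sup>+ t\<in>{0<..}. ennreal (f t powr p * w t) \<partial>lebesgue) (1/p)"
      using C0[of f] f lam by blast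
    also have "\<dots> \<le> ennreal C * enn_powr (ennreal B) (1/p)"
      by (intro mult_mono enn_powr_mono I p0) (auto simp: C_def)
    also have "\<dots> = ennreal (C * B powr (1/p))"
      using B `C > 0` by (simp add: enn_powr_ennreal ennreal_mult)
    finally show ?thesis using `C > 0` B by (simp add: ennreal_le_iff)
  qed
  ultimately show ?thesis using that by blast
qed



lemma ident_leb_meas[measurable]: "(\<lambda>x::real. x) \<in> borel_measurable lebesgue"
  using id_borel_measurable_lebesgue by (simp add: id_def)

lemma emeasure_leb_Ioc: "0 \<le> c \<Longrightarrow> emeasure lebesgue {0<..c::real} = ennreal c"
  by (simp add: emeasure_completion)

lemma raise_p:
  fixes lam X Y C p :: real
  assumes "0 < p" "0 \<le> lam" "0 \<le> X" "0 \<le> Y" "0 \<le> C" "lam * X powr (1/p) \<le> C * Y powr (1/p)"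
  shows "lam powr p * X \<le> C powr p * Y"
proof -
  have "(lam * X powr (1/p)) powr p \<le> (C * Y powr (1/p)) powr p"
    using assms by (intro powr_mono2) auto
  then show ?thesis using assms by (simp add: powr_mult powr_powr)
qed


lemma hardy_indicator:
  assumes "0 < t" "0 < b"
  shows "hardyP (indicator {0<..b}) t = ennreal (min t b / t)"
proof -
  have "(\<integral>\<^sup>+s\<in>{0<..t}. ennreal (indicator {0<..b} s) \<partial>lebesgue) = (\<integral>\<^sup>+s. indicator {0<..min t b} s \<partial>lebesgue)"
    by (intro nn_integral_cong) (auto simp: indicator_def)
  also have "\<dots> = ennreal (min t b)"
    using assms by (simp add: emeasure_leb_Ioc)
  finally show ?thesis unfolding hardyP_def using assms
    by (simp add: ennreal_mult[symmetric])
qed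

lemma doubling:
  assumes wp: "weight_pos w" and p: "1 < p" and C: "C > 0"
    and CC: "\<And>f lam a B. (\<forall>t>0. 0 \<le> f t) \<Longrightarrow> antimono_on {0<..} f \<Longrightarrow> 0 < lam \<Longrightarrow> 0 < a
     \<Longrightarrow> (\<forall>t\<in>{0<..a}. hardyP f t > ennreal lam) \<Longrightarrow> 0 \<le> B
     \<Longrightarrow> (\<integral>\<^sup>+t\<in>{0<..}. ennreal (f t powr p * w t) \<partial>lebesgue) \<le> ennreal B
     \<Longrightarrow> lam * Wfun w a powr (1/p) \<le> C * B powr (1/p)"
    and ab: "0 < b" "b \<le> a"
  shows "Wfun w a \<le> (2 * C) powr p * (a / b) powr p * Wfun w b"
proof -
  have a: "0 < a" using ab by simp
  let ?f = "indicator {0<..b} :: real \<Rightarrow> real"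
  have anti: "antimono_on {0<..} ?f"
    by (auto simp: monotone_on_def indicator_def)
  have lev: "\<forall>t\<in>{0<..a}. hardyP ?f t > ennreal (b / (2 * a))"
  proof
    fix t assume t: "t \<in> {0<..a}"
    have "b / (2 * a) < b / a" using ab by (simp add: divide_strict_left_mono)
    also have "b / a \<le> min t b / t"
      using t ab by (auto simp: min_def field_simps intro: mult_mono)
    finally show "hardyP ?f t > ennreal (b / (2 * a))"
      using t ab by (simp add: hardy_indicator ennreal_less_iff)
  qed
  have I: "(\<integral>\<^sup>+t\<in>{0<..}. ennreal (?f t powr p * w t) \<partial>lebesgue) \<le> ennreal (Wfun w b)"
  proof -
    have "(\<integral>\<^sup>+t\<in>{0<..}. ennreal (?f t powr p * w t) \<partial>lebesgue) = (\<integral>\<^sup>+t\<in>{0<..b}. ennreal (w t) \<partial>lebesgue)"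
      by (intro nn_integral_cong) (auto simp: indicator_def)
    then show ?thesis using W_eq(1)[OF wp ab(1)] by simp
  qed
  have "b / (2 * a) * Wfun w a powr (1/p) \<le> C * Wfun w b powr (1/p)"
    using CC[OF _ anti _ a lev _ I] ab W_eq(2)[OF wp ab(1)] by auto
  then have "(b / (2 * a)) powr p * Wfun w a \<le> C powr p * Wfun w b"
    using raise_p[of p "b / (2 * a)" "Wfun w a" "Wfun w b" C] p ab C W_eq(2)[OF wp ab(1)] W_eq(2)[OF wp a]
    by auto
  then have "(2 * C * a / b) powr p * ((b / (2 * a)) powr p * Wfun w a) \<le> (2 * C * a / b) powr p * (C powr p * Wfun w b)"
    by (intro mult_left_mono) auto
  moreover have "(2 * C * a / b) powr p * (b / (2 * a)) powr p = C powr p"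
    using ab C by (simp add: powr_mult[symmetric])
  moreover have "(2 * C * a / b) powr p * C powr p = C powr p * ((2 * C) powr p * (a / b) powr p)"
    using ab C by (simp add: powr_mult[symmetric] powr_divide mult_ac)
  ultimately have "C powr p * Wfun w a \<le> C powr p * ((2 * C) powr p * (a / b) powr p * Wfun w b)"
    by (simp add: mult.assoc[symmetric])
  then show ?thesis using C by simp
qed


lemma W_zero:
  fixes a b :: real
  assumes wp: "weight_pos w" and p: "1 < p" and C: "C > 0"
    and CC: "\<And>f lam a B. (\<forall>t>0. 0 \<le> f t) \<Longrightarrow> antimono_on {0<..} f \<Longrightarrow> 0 < lam \<Longrightarrow> 0 < a
     \<Longrightarrow> (\<forall>t\<in>{0<..a}. hardyP f t > ennreal lam) \<Longrightarrow> 0 \<le> B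
     \<Longrightarrow> (\<integral>\<^sup>+t\<in>{0<..}. ennreal (f t powr p * w t) \<partial>lebesgue) \<le> ennreal B
     \<Longrightarrow> lam * Wfun w a powr (1/p) \<le> C * B powr (1/p)"
    and b: "0 < b" "Wfun w b = 0" and a: "0 < a"
  shows "Wfun w a = 0"
proof (cases "a \<le> b")
  case True
  then show ?thesis using W_mono[OF wp a True] W_eq(2)[OF wp a] b by simp
next
  case False
  then show ?thesis using doubling[OF wp p C CC b(1), where a=a] W_eq(2)[OF wp a] b by simp
qed

lemma geo_half: "(\<Sum>j\<in>{k..n}. (1/2::real)^j) \<le> 2 * (1/2)^k"
proof (induction n)
  case 0
  then show ?case by (cases k) auto
next
  case (Suc n)
  show ?case
  proof (cases "k \<le> Suc n")
    case True
    have "(\<Sum>j\<in>{k..Suc n}. (1/2::real)^j) = 2 * (1/2)^k - 2 * (1/2)^(Suc n) + (1/2)^(Suc n)"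
      using True
    proof (induction n arbitrary: k)
      case 0
      then show ?case by (cases k) (auto simp: atLeast0_atMost_Suc)
    next
      case (Suc n)
      show ?case
      proof (cases "k = Suc (Suc n)")
        case True then show ?thesis by simp
      next
        case False
        then have "k \<le> Suc n" using Suc.prems by simp
        then have "(\<Sum>j\<in>{k..Suc (Suc n)}. (1/2::real)^j) = (\<Sum>j\<in>{k..Suc n}. (1/2::real)^j) + (1/2)^(Suc (Suc n))"
          by (simp add: sum.atLeast_Suc_atMost_Suc_shift sum.cl_ivl_Suc)
        then show ?thesis using Suc.IH[OF `k \<le> Suc n`] by simp
      qed
    qed
    then show ?thesis by simp
  next
    case False
    then show ?thesis by simp
  qed
qed

definition testf :: "real \<Rightarrow> nat \<Rightarrow> real \<Rightarrow> real" where
  "testf s m x = (\<Sum>j\<le>m. indicator {0<..(2^j* s)} x / (2^j* s))"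

lemma testf_nonneg: "0 < s \<Longrightarrow> 0 \<le> testf s m x"
  unfolding testf_def by (intro sum_nonneg) auto

lemma testf_anti: "0 < s \<Longrightarrow> antimono_on {0<..} (testf s m)"
  unfolding testf_def monotone_on_def
  by (auto intro!: sum_mono divide_right_mono simp: indicator_def)

lemma testf_hardy:
  assumes s: "0 < s" and t: "0 < t" "t \<le> 2^m * s"
  shows "hardyP (testf s m) t \<ge> ennreal ((m+1) / (2^m * s))"
proof -
  have "(\<integral>\<^sup>+x\<in>{0<..t}. ennreal (testf s m x) \<partial>lebesgue) =
        (\<integral>\<^sup>+x. (\<Sum>j\<le>m. ennreal (1 / (2^j* s)) * indicator {0<..(min t (2^j* s))} x) \<partial>lebesgue)"
  proof (intro nn_integral_cong)
    fix x
    have "ennreal (testf s m x) * indicator {0<..t} x = ennreal (testf s m x * indicator {0<..t} x)"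
      by (simp add: indicator_def)
    also have "\<dots> = ennreal (\<Sum>j\<le>m. indicator {0<..(2^j * s)} x * indicator {0<..t} x / (2^j * s))"
      unfolding testf_def by (simp add: sum_distrib_right)
    also have "\<dots> = (\<Sum>j\<le>m. ennreal (indicator {0<..(2^j * s)} x * indicator {0<..t} x / (2^j * s)))"
      using s by (intro sum_ennreal[symmetric]) auto
    also have "\<dots> = (\<Sum>j\<le>m. ennreal (1 / (2^j * s)) * indicator {0<..(min t (2^j * s))} x)"
      by (intro sum.cong) (auto simp: indicator_def)
    finally show "ennreal (testf s m x) * indicator {0<..t} x = (\<Sum>j\<le>m. ennreal (1 / (2^j * s)) * indicator {0<..(min t (2^j * s))} x)" .
  qed
  also have "\<dots> = (\<Sum>j\<le>m. ennreal (1 / (2^j* s)) * ennreal (min t (2^j* s)))"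
    using s t by (subst nn_integral_sum) (measurable, auto simp: nn_integral_cmult_indicator emeasure_leb_Ioc)
  also have "\<dots> = ennreal (\<Sum>j\<le>m. min t (2^j* s) / (2^j* s))"
    using s t by (auto simp: ennreal_mult[symmetric] intro!: sum_ennreal)
  finally have eq: "hardyP (testf s m) t = ennreal ((\<Sum>j\<le>m. min t (2^j* s) / (2^j* s)) / t)"
    unfolding hardyP_def using s t
    by (simp add: ennreal_mult[symmetric] sum_nonneg)
  have "(m+1) / (2^m * s) = (\<Sum>j\<le>m. 1 / (2^m * s))" by simp
  also have "\<dots> \<le> (\<Sum>j\<le>m. min t (2^j* s) / (2^j* s) / t)"
  proof (intro sum_mono)
    fix j assume j: "j \<in> {..m}"
    have jm: "(2::real)^j * s \<le> 2^m * s" using j s by (intro mult_right_mono power_increasing) auto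
    have "min t (2^j* s) / (2^j* s) / t = 1 / max t (2^j* s)"
      using s t by (auto simp: min_def max_def field_simps)
    also have "1 / (2^m * s) \<le> 1 / max t (2^j* s)"
      using s t jm by (intro divide_left_mono) auto
    finally show "1 / (2^m * s) \<le> min t (2^j* s) / (2^j* s) / t" by simp
  qed
  also have "\<dots> = (\<Sum>j\<le>m. min t (2^j* s) / (2^j* s)) / t"
    by (simp add: sum_divide_distrib)
  finally show ?thesis unfolding eq by (intro ennreal_leI) (simp add: add.commute)
qed


lemma testf_upper:
  assumes s: "0 < s" and x: "0 < x" and p: "0 < p"
  shows "testf s m x powr p \<le> (\<Sum>k\<le>m. 2 powr p * (2^k * s) powr (-p) * indicator {0<..(2^k * s)} x)"
proof (cases "x \<le> 2^m * s")
  case False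
  have "testf s m x = 0"
    unfolding testf_def
  proof (intro sum.neutral ballI)
    fix j assume "j \<in> {..m}"
    then have "(2::real)^j * s \<le> 2^m * s" using s by (intro mult_right_mono power_increasing) auto
    then show "indicator {0<..(2^j * s)} x / (2^j * s) = 0" using False by (auto simp: indicator_def)
  qed
  then show ?thesis by (auto intro!: sum_nonneg)
next
  case True
  define k where "k = (LEAST k. x \<le> 2^k * s)"
  have kx: "x \<le> 2^k * s" unfolding k_def by (rule LeastI[of _ m]) (use True in simp)
  have km: "k \<le> m" unfolding k_def by (rule Least_le) (use True in simp)
  have jk: "j < k \<Longrightarrow> \<not> x \<le> 2^j * s" for j unfolding k_def by (rule not_less_Least)
  have "testf s m x \<le> (\<Sum>j\<le>m. if k \<le> j then (1/2)^j / s else 0)"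
    unfolding testf_def
  proof (intro sum_mono)
    fix j assume "j \<in> {..m}"
    show "indicator {0<..(2^j * s)} x / (2^j * s) \<le> (if k \<le> j then (1/2)^j / s else 0)"
      using jk[of j] s by (auto simp: indicator_def power_one_over field_simps)
  qed
  also have "\<dots> = (\<Sum>j\<in>{k..m}. (1/2)^j / s)"
  proof -
    have "{j\<in>{..m}. k \<le> j} = {k..m}" by auto
    then show ?thesis by (simp add: sum.inter_filter[symmetric])
  qed
  also have "\<dots> = (\<Sum>j\<in>{k..m}. (1/2::real)^j) / s" by (simp add: sum_divide_distrib)
  also have "\<dots> \<le> 2 * (1/2)^k / s" using geo_half[of k m] s by (simp add: divide_right_mono)
  also have "\<dots> = 2 / (2^k * s)" by (simp add: power_one_over)
  finally have fle: "testf s m x \<le> 2 / (2^k * s)" .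
  have "testf s m x powr p \<le> (2 / (2^k * s)) powr p"
    using fle p s testf_nonneg[OF s] by (intro powr_mono2) auto
  also have "\<dots> = 2 powr p * (2^k * s) powr (-p) * indicator {0<..(2^k * s)} x"
    using s x kx by (simp add: powr_divide powr_minus_divide)
  also have "\<dots> \<le> (\<Sum>k\<le>m. 2 powr p * (2^k * s) powr (-p) * indicator {0<..(2^k * s)} x)"
    using km by (intro member_le_sum) auto
  finally show ?thesis .
qed


lemma meas_w:
  assumes wp: "weight_pos w" and t: "0 < t"
  shows "(\<lambda>x. ennreal (w x) * indicator {0<..t} x) \<in> borel_measurable lebesgue"
proof -
  have "integrable lebesgue (\<lambda>x. indicator {0<..t} x * w x)"
    using assms unfolding weight_pos_def set_integrable_def by auto
  then have "(\<lambda>x. ennreal (indicator {0<..t} x * w x)) \<in> borel_measurable lebesgue" by measurable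
  moreover have "(\<lambda>x. ennreal (indicator {0<..t} x * w x)) = (\<lambda>x. ennreal (w x) * indicator {0<..t} x)"
    by (auto simp: indicator_def)
  ultimately show ?thesis by simp
qed

lemma testf_int:
  assumes wp: "weight_pos w" and s: "0 < s" and p: "0 < p"
  shows "(\<integral>\<^sup>+t\<in>{0<..}. ennreal (testf s m t powr p * w t) \<partial>lebesgue)
     \<le> ennreal (\<Sum>k\<le>m. 2 powr p * (2^k * s) powr (-p) * Wfun w (2^k * s))"
proof -
  have "(\<integral>\<^sup>+t\<in>{0<..}. ennreal (testf s m t powr p * w t) \<partial>lebesgue)
     \<le> (\<integral>\<^sup>+t. (\<Sum>k\<le>m. ennreal (2 powr p * (2^k * s) powr (-p)) * (ennreal (w t) * indicator {0<..(2^k * s)} t)) \<partial>lebesgue)"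
  proof (intro nn_integral_mono)
    fix t
    show "ennreal (testf s m t powr p * w t) * indicator {0<..} t
       \<le> (\<Sum>k\<le>m. ennreal (2 powr p * (2^k * s) powr (-p)) * (ennreal (w t) * indicator {0<..(2^k * s)} t))"
    proof (cases "0 < t")
      case False then show ?thesis by simp
    next
      case True
      have wt: "0 \<le> w t" using wp True unfolding weight_pos_def by auto
      have "testf s m t powr p * w t \<le> (\<Sum>k\<le>m. 2 powr p * (2^k * s) powr (-p) * indicator {0<..(2^k * s)} t) * w t"
        using testf_upper[OF s True p] wt by (rule mult_right_mono)
      also have "\<dots> = (\<Sum>k\<le>m. 2 powr p * (2^k * s) powr (-p) * (w t * indicator {0<..(2^k * s)} t))"
        unfolding sum_distrib_right by (intro sum.cong) auto
      finally have "ennreal (testf s m t powr p * w t) \<le> ennreal (\<Sum>k\<le>m. 2 powr p * (2^k * s) powr (-p) * (w t * indicator {0<..(2^k * s)} t))"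
        by (rule ennreal_leI)
      also have "\<dots> = (\<Sum>k\<le>m. ennreal (2 powr p * (2^k * s) powr (-p) * (w t * indicator {0<..(2^k * s)} t)))"
        using wt by (intro sum_ennreal[symmetric]) auto
      also have "\<dots> = (\<Sum>k\<le>m. ennreal (2 powr p * (2^k * s) powr (-p)) * (ennreal (w t) * indicator {0<..(2^k * s)} t))"
        using wt by (intro sum.cong refl) (auto simp: indicator_def ennreal_mult)
      finally show ?thesis using True by simp
    qed
  qed
  also have "\<dots> = (\<Sum>k\<le>m. ennreal (2 powr p * (2^k * s) powr (-p)) * ennreal (Wfun w (2^k * s)))"
  proof (subst nn_integral_sum)
    show "\<And>k. k \<in> {..m} \<Longrightarrow> (\<lambda>t. ennreal (2 powr p * (2^k * s) powr (-p)) * (ennreal (w t) * indicator {0<..(2^k * s)} t)) \<in> borel_measurable lebesgue"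
      using s by (intro borel_measurable_times_ennreal borel_measurable_const meas_w[OF wp]) auto
    show "(\<Sum>k\<le>m. \<integral>\<^sup>+ t. ennreal (2 powr p * (2^k * s) powr (-p)) * (ennreal (w t) * indicator {0<..(2^k * s)} t) \<partial>lebesgue) =
       (\<Sum>k\<le>m. ennreal (2 powr p * (2^k * s) powr (-p)) * ennreal (Wfun w (2^k * s)))"
      using s by (intro sum.cong refl, subst nn_integral_cmult) (auto intro!: meas_w[OF wp] simp: W_eq(1)[OF wp])
  qed
  also have "\<dots> = ennreal (\<Sum>k\<le>m. 2 powr p * (2^k * s) powr (-p) * Wfun w (2^k * s))"
    using s W_eq(2)[OF wp] by (subst sum_ennreal[symmetric]) (auto simp: ennreal_mult)
  finally show ?thesis .
qed


lemma doublingD: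
  assumes wp: "weight_pos w" and p: "1 < p" and C: "C > 0"
    and CC: "\<And>f lam a B. (\<forall>t>0. 0 \<le> f t) \<Longrightarrow> antimono_on {0<..} f \<Longrightarrow> 0 < lam \<Longrightarrow> 0 < a
     \<Longrightarrow> (\<forall>t\<in>{0<..a}. hardyP f t > ennreal lam) \<Longrightarrow> 0 \<le> B
     \<Longrightarrow> (\<integral>\<^sup>+t\<in>{0<..}. ennreal (f t powr p * w t) \<partial>lebesgue) \<le> ennreal B
     \<Longrightarrow> lam * Wfun w a powr (1/p) \<le> C * B powr (1/p)"
    and ab: "0 < b" "b \<le> a"
  shows "Wfun w a * a powr (-p) \<le> (2 * C) powr p * (Wfun w b * b powr (-p))"
proof -
  have "Wfun w a * a powr (-p) \<le> (2 * C) powr p * (a / b) powr p * Wfun w b * a powr (-p)"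
    using doubling[OF wp p C CC ab] by (intro mult_right_mono) auto
  also have "(a / b) powr p * a powr (-p) = b powr (-p)"
    using ab by (simp add: powr_divide powr_minus field_simps)
  then have "(2 * C) powr p * (a / b) powr p * Wfun w b * a powr (-p) = (2 * C) powr p * (Wfun w b * b powr (-p))"
    by (metis mult.assoc mult.commute)
  finally show ?thesis .
qed

lemma index_step:
  assumes wp: "weight_pos w" and p: "1 < p" and C: "C > 0"
    and CC: "\<And>f lam a B. (\<forall>t>0. 0 \<le> f t) \<Longrightarrow> antimono_on {0<..} f \<Longrightarrow> 0 < lam \<Longrightarrow> 0 < a
     \<Longrightarrow> (\<forall>t\<in>{0<..a}. hardyP f t > ennreal lam) \<Longrightarrow> 0 \<le> B
     \<Longrightarrow> (\<integral>\<^sup>+t\<in>{0<..}. ennreal (f t powr p * w t) \<partial>lebesgue) \<le> ennreal B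
     \<Longrightarrow> lam * Wfun w a powr (1/p) \<le> C * B powr (1/p)"
    and m: "(real m + 1) powr (p - 1) > 2 * (2 powr p)^3 * (C powr p)^2"
    and s: "0 < s"
  shows "Wfun w (2^m * s) * (2^m * s) powr (-p) \<le> 1/2 * (Wfun w s * s powr (-p))"
proof (rule ccontr)
  define r where "r = 2^m * s"
  define D where "D t = Wfun w t * t powr (-p)" for t
  define M where "M = real m + 1"
  define X where "X = (2::real) powr p"
  define Cp where "Cp = C powr p"
  have r: "0 < r" "s \<le> r" using s unfolding r_def by auto
  assume "\<not> ?thesis"
  then have hyp: "D s < 2 * D r" unfolding D_def r_def by simp
  have Dnn: "0 \<le> D t" if "0 < t" for t unfolding D_def using W_eq(2)[OF wp that] by simp
  have Dr: "0 < D r" using hyp Dnn[OF s] by simp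
  have M: "1 \<le> M" unfolding M_def by simp
  define B where "B = (\<Sum>k\<le>m. 2 powr p * (2^k * s) powr (-p) * Wfun w (2^k * s))"
  have Bnn: "0 \<le> B" unfolding B_def using W_eq(2)[OF wp] s by (intro sum_nonneg) auto
  have lam: "0 < M / (2 * r)" using M r by simp
  have lev: "\<forall>t\<in>{0<..r}. hardyP (testf s m) t > ennreal (M / (2 * r))"
  proof
    fix t assume t: "t \<in> {0<..r}"
    have "ennreal (M / (2 * r)) < ennreal ((m+1) / (2^m * s))"
      using M r s unfolding M_def r_def by (subst ennreal_less_iff) (auto simp: field_simps intro!: add_pos_nonneg)
    also have "\<dots> \<le> hardyP (testf s m) t" using testf_hardy[OF s, of t m] t unfolding r_def by (auto simp: add.commute)
    finally show "hardyP (testf s m) t > ennreal (M / (2 * r))" .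
  qed
  have "M / (2 * r) * Wfun w r powr (1/p) \<le> C * B powr (1/p)"
    using CC[OF _ testf_anti[OF s] lam r(1) lev Bnn] testf_nonneg[OF s] testf_int[OF wp s, of p m] p
    unfolding B_def by auto
  then have main: "(M / (2 * r)) powr p * Wfun w r \<le> Cp * B"
    unfolding Cp_def using raise_p[of p "M / (2 * r)" "Wfun w r" B C] p lam C Bnn W_eq(2)[OF wp r(1)] by auto
  have "(M / (2 * r)) powr p * Wfun w r = M powr p / X * D r"
    unfolding D_def X_def using M r by (simp add: powr_divide powr_mult powr_minus field_simps)
  moreover have "B \<le> M * (X * ((2 * C) powr p * (2 * D r)))"
  proof -
    have "B \<le> (\<Sum>k\<le>m. X * ((2 * C) powr p * (2 * D r)))"
      unfolding B_def
    proof (intro sum_mono)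
      fix k assume "k \<in> {..m}"
      have sk: "s \<le> 2^k * s" using s by simp
      have "2 powr p * (2^k * s) powr (-p) * Wfun w (2^k * s) = X * D (2^k * s)"
        unfolding X_def D_def by simp
      also have "\<dots> \<le> X * ((2 * C) powr p * D s)"
        unfolding D_def X_def using doublingD[OF wp p C CC s sk] by (intro mult_left_mono) auto
      also have "\<dots> \<le> X * ((2 * C) powr p * (2 * D r))"
        unfolding X_def using hyp by (intro mult_left_mono) auto
      finally show "2 powr p * (2^k * s) powr (-p) * Wfun w (2^k * s) \<le> X * ((2 * C) powr p * (2 * D r))" .
    qed
    also have "\<dots> = M * (X * ((2 * C) powr p * (2 * D r)))" unfolding M_def by simp
    finally show ?thesis .
  qed
  ultimately have "M powr p / X * D r \<le> Cp * (M * (X * ((2 * C) powr p * (2 * D r))))"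
    using main Cp_def by (smt (verit) mult_left_mono powr_ge_zero)
  moreover have "(2 * C) powr p = X * Cp" unfolding X_def Cp_def using C by (simp add: powr_mult)
  ultimately have "M powr p / X * D r \<le> (2 * X^2 * Cp^2 * M) * D r"
    by (simp add: power2_eq_square mult_ac)
  then have "M powr p / X * D r \<le> (2 * X^2 * Cp^2 * M) * D r" .
  then have "M powr p / X \<le> 2 * X^2 * Cp^2 * M" using Dr by (rule mult_right_le_imp_le)
  then have "M powr p \<le> 2 * X^3 * Cp^2 * M" unfolding X_def
    by (simp add: field_simps power3_eq_cube power2_eq_square)
  moreover have "M powr p = M * M powr (p - 1)" using M by (simp add: powr_diff)
  ultimately have "M powr (p - 1) \<le> 2 * X^3 * Cp^2" using M by (simp add: mult.commute)
  then show False using m unfolding M_def X_def Cp_def by simp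
qed


lemma exists_m:
  assumes p: "1 < p"
  shows "\<exists>m::nat. 1 \<le> m \<and> (real m + 1) powr (p - 1) > K"
proof -
  define m where "m = nat \<lceil>max K 1 powr (1/(p-1))\<rceil> + 1"
  have "max K 1 powr (1/(p-1)) < real m + 1" unfolding m_def by linarith
  then have "(max K 1 powr (1/(p-1))) powr (p - 1) < (real m + 1) powr (p - 1)"
    using p by (intro powr_less_mono2) auto
  moreover have "(max K 1 powr (1/(p-1))) powr (p - 1) = max K 1"
    using p by (simp add: powr_powr)
  ultimately show ?thesis unfolding m_def by (intro exI[of _ m]) (auto simp: m_def)
qed

lemma level:
  assumes Nf: "lorentz_norm p u w f = ennreal Nr" and Nr: "0 < Nr" and t: "0 < t" and Wt: "0 < Wfun w t"
  shows "umeas u {x. \<bar>f x\<bar> > 2 * Nr / Wfun w t powr (1/p)} \<le> ennreal t"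
proof -
  define a where "a = Wfun w t powr (1/p)"
  have a: "0 < a" unfolding a_def using Wt by simp
  have "rearr u f t * ennreal a \<le> ennreal Nr"
    unfolding Nf[symmetric] lorentz_norm_def a_def using t by (intro SUP_upper) auto
  then have "rearr u f t < top"
  proof (rule contrapos_pp)
    assume "\<not> rearr u f t < top"
    then have "rearr u f t = top" using top.not_eq_extremum by blast
    then show "\<not> rearr u f t * ennreal a \<le> ennreal Nr" using a by (simp add: ennreal_top_mult top_unique)
  qed
  then obtain \<rho> where rho: "rearr u f t = ennreal \<rho>" "0 \<le> \<rho>" by (auto simp: less_top_ennreal)
  have "ennreal (\<rho> * a) \<le> ennreal Nr" using `rearr u f t * ennreal a \<le> ennreal Nr` rho a
    by (simp add: ennreal_mult)
  then have "\<rho> * a \<le> Nr" using Nr by (simp add: ennreal_le_iff)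
  then have "\<rho> < 2 * Nr / a" using a Nr by (simp add: field_simps)
  then have "rearr u f t < ennreal (2 * Nr / a)" using rho by (simp add: ennreal_less_iff)
  then obtain z where z: "z \<in> ennreal ` {y::real. y > 0 \<and> umeas u {x. \<bar>f x\<bar> > y} \<le> ennreal t}" "z < ennreal (2 * Nr / a)"
    unfolding rearr_def by (auto simp: Inf_less_iff)
  then obtain y where y: "y > 0" "umeas u {x. \<bar>f x\<bar> > y} \<le> ennreal t" "ennreal y < ennreal (2 * Nr / a)" by auto
  then have "y < 2 * Nr / a" by (simp add: ennreal_less_iff)
  then have "umeas u {x. \<bar>f x\<bar> > 2 * Nr / a} \<le> umeas u {x. \<bar>f x\<bar> > y}" by (intro umeas_mono) auto
  then show ?thesis using y unfolding a_def by simp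
qed

lemma pw_bound:
  fixes Y :: "nat \<Rightarrow> real" and v :: real
  shows "ennreal v \<le> ennreal (Y 0) + (\<Sum>k. ennreal (Y (Suc k)) * (if Y k < v then 1 else 0)) + (if \<forall>k. Y k < v then top else 0)"
proof (cases "\<forall>k. Y k < v")
  case True then show ?thesis by simp
next
  case False
  then obtain n where n: "v \<le> Y n" by (auto simp: not_less)
  define j where "j = (LEAST j. v \<le> Y j)"
  have vj: "v \<le> Y j" unfolding j_def by (rule LeastI[of _ n]) (rule n)
  have less: "i < j \<Longrightarrow> Y i < v" for i unfolding j_def using not_less_Least[of i "\<lambda>j. v \<le> Y j"] by auto
  show ?thesis
  proof (cases j)
    case 0
    then have "ennreal v \<le> ennreal (Y 0)" using vj by (intro ennreal_leI) simp
    then show ?thesis by (simp add: add.assoc order_trans[OF _ add_increasing2])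
  next
    case (Suc k)
    then have "Y k < v" using less by simp
    then have "ennreal v \<le> ennreal (Y (Suc k)) * (if Y k < v then 1 else 0)" using vj Suc by (simp add: ennreal_leI)
    also have "\<dots> \<le> (\<Sum>k. ennreal (Y (Suc k)) * (if Y k < v then 1 else 0))"
    proof (rule ccontr)
      assume "\<not> ?thesis"
      then have "(\<Sum>k. ennreal (Y (Suc k)) * (if Y k < v then 1 else 0)) < ennreal (Y (Suc k)) * (if Y k < v then 1 else 0)"
        by (simp add: not_le)
      from ennreal_suminf_lessD[OF this, of k] show False by simp
    qed
    finally have "ennreal v \<le> (\<Sum>k. ennreal (Y (Suc k)) * (if Y k < v then 1 else 0))" .
    then show ?thesis using False by (simp add: add_increasing)
  qed
qed


lemma V_step:
  assumes p: "1 < p" and s: "0 < s" and W: "\<forall>t>0. 0 \<le> Wfun w t"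
    and idx: "Wfun w (2^m * s) * (2^m * s) powr (-p) \<le> 1/2 * (Wfun w s * s powr (-p))"
  shows "2 powr (1/p) * (Wfun w (2^m * s) powr (1/p) / (2^m * s)) \<le> Wfun w s powr (1/p) / s"
proof -
  have s2: "0 < 2^m * s" using s by simp
  have eq: "(Wfun w t * t powr (-p)) powr (1/p) = Wfun w t powr (1/p) / t" if "0 < t" for t
  proof -
    have "0 \<le> Wfun w t" using W that by auto
    then show ?thesis using that p by (simp add: powr_minus_divide powr_divide powr_powr)
  qed
  have "(Wfun w (2^m * s) * (2^m * s) powr (-p)) powr (1/p) \<le> (1/2 * (Wfun w s * s powr (-p))) powr (1/p)"
    using idx p W s2 by (intro powr_mono2) auto
  also have "\<dots> = (1/2) powr (1/p) * (Wfun w s powr (1/p) / s)"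
  proof -
    have "0 \<le> Wfun w s * s powr (-p)" using W s by auto
    then have "(1/2 * (Wfun w s * s powr (-p))) powr (1/p) = (1/2) powr (1/p) * (Wfun w s * s powr (-p)) powr (1/p)"
      by (intro powr_mult)
    then show ?thesis using eq[OF s] by simp
  qed
  finally have "Wfun w (2^m * s) powr (1/p) / (2^m * s) \<le> (1/2) powr (1/p) * (Wfun w s powr (1/p) / s)"
    using eq[OF s2] by simp
  then have "2 powr (1/p) * (Wfun w (2^m * s) powr (1/p) / (2^m * s)) \<le> 2 powr (1/p) * ((1/2) powr (1/p) * (Wfun w s powr (1/p) / s))"
    by (intro mult_left_mono) auto
  also have "\<dots> = Wfun w s powr (1/p) / s"
    by (simp add: mult.assoc[symmetric] powr_mult[symmetric])
  finally show ?thesis .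
qed

lemma V_iter:
  assumes p: "1 < p" and r: "0 < r" and W: "\<forall>t>0. 0 \<le> Wfun w t"
    and idx: "\<forall>s>0. Wfun w (2^m * s) * (2^m * s) powr (-p) \<le> 1/2 * (Wfun w s * s powr (-p))"
  shows "(2 powr (1/p))^k * (Wfun w r powr (1/p) / r) \<le> Wfun w (r / 2^(m*k)) powr (1/p) / (r / 2^(m*k))"
proof (induction k)
  case 0 then show ?case by simp
next
  case (Suc k)
  define s where "s = r / 2^(m * Suc k)"
  have s: "0 < s" using r unfolding s_def by simp
  have eq: "2^m * s = r / 2^(m*k)" unfolding s_def by (simp add: power_add field_simps)
  have "(2 powr (1/p))^Suc k * (Wfun w r powr (1/p) / r) = 2 powr (1/p) * ((2 powr (1/p))^k * (Wfun w r powr (1/p) / r))"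
    by simp
  also have "\<dots> \<le> 2 powr (1/p) * (Wfun w (r / 2^(m*k)) powr (1/p) / (r / 2^(m*k)))"
    using Suc.IH by (intro mult_left_mono) auto
  also have "\<dots> \<le> Wfun w s powr (1/p) / s"
    using V_step[OF p s W] idx s eq by metis
  finally show ?case unfolding s_def .
qed


lemma upper_main:
  assumes wu: "weight_R u" and wp: "weight_pos w" and p: "1 < p"
    and Wpos: "\<forall>t>0. 0 < Wfun w t"
    and idx: "\<forall>s>0. Wfun w (2^m * s) * (2^m * s) powr (-p) \<le> 1/2 * (Wfun w s * s powr (-p))"
    and m1: "1 \<le> m"
    and E: "E \<in> sets lebesgue" and uE: "umeas u E = ennreal r" and r: "0 < r"
    and f: "f \<in> borel_measurable lebesgue" and Nf: "lorentz_norm p u w f = ennreal Nr" and Nr: "0 < Nr"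
  shows "integrable lebesgue (\<lambda>x. f x * indicator E x * u x) \<and>
     \<bar>\<integral>x. f x * indicator E x * u x \<partial>lebesgue\<bar>
       \<le> (2 + 2 * 2^m * (2 powr (-1/p) / (1 - 2 powr (-1/p)))) * Nr * (r / Wfun w r powr (1/p))"
proof -
  note [measurable] = f E
  have um[measurable]: "u \<in> borel_measurable lebesgue" using wu unfolding weight_R_def by auto
  have uAE: "AE x in lebesgue. 0 < u x" using wu unfolding weight_R_def by auto
  define \<alpha> :: real where "\<alpha> = 2 powr (-1/p)"
  define \<beta> :: real where "\<beta> = 2 powr (1/p)"
  have \<alpha>: "0 < \<alpha>" "\<alpha> < 1" unfolding \<alpha>_def using p by (auto intro!: powr_less_one)
  have \<alpha>\<beta>: "\<alpha> = 1 / \<beta>" "0 < \<beta>" unfolding \<alpha>_def \<beta>_def by (auto simp: powr_minus_divide)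
  define R where "R = r / Wfun w r powr (1/p)"
  have R: "0 < R" unfolding R_def using r Wpos by auto
  define tk where "tk k = r / 2^(m*k)" for k
  have tk: "0 < tk k" for k unfolding tk_def using r by simp
  have tkS: "tk k = 2^m * tk (Suc k)" for k unfolding tk_def by (simp add: power_add field_simps)
  define Y where "Y k = 2 * Nr / Wfun w (tk k) powr (1/p)" for k
  have Ynn: "0 \<le> Y k" for k unfolding Y_def using Nr by simp
  define A where "A k = {x. Y k < \<bar>f x\<bar>}" for k
  define Ainf where "Ainf = {x. \<forall>k. Y k < \<bar>f x\<bar>}"
  have Ameas[measurable]: "A k \<in> sets lebesgue" for k
  proof -
    have "{x \<in> space lebesgue. Y k < \<bar>f x\<bar>} \<in> sets lebesgue" by measurable
    then show ?thesis unfolding A_def by simp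
  qed
  have Ainfmeas[measurable]: "Ainf \<in> sets lebesgue"
  proof -
    have "{x \<in> space lebesgue. \<forall>k. Y k < \<bar>f x\<bar>} \<in> sets lebesgue" by measurable
    then show ?thesis unfolding Ainf_def by simp
  qed
  have Wnn: "\<forall>t>0. 0 \<le> Wfun w t" using Wpos by (auto intro: less_imp_le)
  have uA: "umeas u (A k) \<le> ennreal (tk k)" for k
    unfolding A_def Y_def using level[OF Nf Nr tk] Wpos tk by auto
  have Vk: "\<beta>^k * (1 / R) \<le> Wfun w (tk k) powr (1/p) / tk k" for k
    using V_iter[OF p r Wnn idx, of k] unfolding \<beta>_def R_def tk_def using r Wpos by simp
  have termk: "Y (Suc k) * tk k \<le> 2 * Nr * 2^m * R * \<alpha>^(Suc k)" for k
  proof -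
    define T where "T = tk (Suc k)"
    define Wk where "Wk = Wfun w T powr (1/p)"
    have T: "0 < T" unfolding T_def by (rule tk)
    have Wk: "0 < Wk" unfolding Wk_def using Wpos T by (simp add: less_imp_neq[symmetric])
    have "Y (Suc k) * tk k = 2 * Nr * 2^m * (T / Wk)"
      unfolding Y_def Wk_def T_def tkS[of k] by simp
    also have "T / Wk = 1 / (Wk / T)" by simp
    also have "\<dots> \<le> 1 / (\<beta>^(Suc k) * (1 / R))"
      using Vk[of "Suc k"] \<alpha>\<beta> R Wk T unfolding Wk_def T_def by (intro divide_left_mono) auto
    also have "\<dots> = R * \<alpha>^(Suc k)" using \<alpha>\<beta> R by (simp add: power_one_over)
    finally show ?thesis using Nr by (simp add: mult_left_mono mult.assoc)
  qed
  have Y0: "Y 0 * r = 2 * Nr * R" unfolding Y_def tk_def R_def by simp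
  have uAinf: "umeas u Ainf = 0"
  proof -
    have "umeas u Ainf \<le> ennreal (r * (1/2)^k)" for k
    proof -
      have "umeas u Ainf \<le> umeas u (A k)" unfolding Ainf_def A_def by (intro umeas_mono) auto
      also have "\<dots> \<le> ennreal (tk k)" by (rule uA)
      also have "tk k \<le> r * (1/2)^k"
      proof -
        have "(2::real)^k \<le> 2^(m*k)" using m1 by (intro power_increasing) auto
        then show ?thesis unfolding tk_def using r by (simp add: field_simps power_one_over)
      qed
      finally show ?thesis by (simp add: ennreal_leI)
    qed
    moreover have "(\<lambda>k. ennreal (r * (1/2)^k)) \<longlonglongrightarrow> ennreal (r * 0)"
      by (intro tendsto_ennrealI tendsto_mult tendsto_const LIMSEQ_power_zero) auto
    ultimately have "umeas u Ainf \<le> ennreal (r * 0)" by (intro LIMSEQ_le_const) auto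
    then show ?thesis by simp
  qed
  define Bd where "Bd = (2 + 2 * 2^m * (\<alpha> / (1 - \<alpha>))) * Nr * R"
  have bound: "(\<integral>\<^sup>+x. ennreal (norm (f x * indicator E x * u x)) \<partial>lebesgue) \<le> ennreal Bd"
  proof -
    define c where "c x = ennreal (u x) * indicator E x" for x
    define G where "G x = ennreal (Y 0) * (ennreal (u x) * indicator E x)
       + (\<Sum>k. ennreal (Y (Suc k)) * (ennreal (u x) * indicator (A k) x))
       + top * (ennreal (u x) * indicator Ainf x)" for x
    have "(\<integral>\<^sup>+x. ennreal (norm (f x * indicator E x * u x)) \<partial>lebesgue) = (\<integral>\<^sup>+x. ennreal \<bar>f x\<bar> * c x \<partial>lebesgue)"
    proof (intro nn_integral_cong_AE)
      show "AE x in lebesgue. ennreal (norm (f x * indicator E x * u x)) = ennreal \<bar>f x\<bar> * c x"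
        using uAE by eventually_elim (auto simp: c_def indicator_def abs_mult ennreal_mult)
    qed
    also have "\<dots> \<le> (\<integral>\<^sup>+x. G x \<partial>lebesgue)"
    proof (intro nn_integral_mono)
      fix x
      define v where "v = \<bar>f x\<bar>"
      define S where "S = (\<Sum>k. ennreal (Y (Suc k)) * (if Y k < v then 1 else 0))"
      define T where "T = (if \<forall>k. Y k < v then top else (0::ennreal))"
      have "ennreal v * c x \<le> (ennreal (Y 0) + S + T) * c x"
        unfolding S_def T_def by (intro mult_right_mono pw_bound) auto
      also have "\<dots> = ennreal (Y 0) * c x + S * c x + T * c x" by (simp add: distrib_right)
      also have "S * c x \<le> (\<Sum>k. ennreal (Y (Suc k)) * (ennreal (u x) * indicator (A k) x))"
        unfolding S_def ennreal_suminf_multc[symmetric]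
      proof (intro suminf_le summableI)
        fix k
        show "ennreal (Y (Suc k)) * (if Y k < v then 1 else 0) * c x \<le> ennreal (Y (Suc k)) * (ennreal (u x) * indicator (A k) x)"
          unfolding c_def A_def v_def by (auto simp: indicator_def)
      qed
      also have "T * c x \<le> top * (ennreal (u x) * indicator Ainf x)"
        unfolding T_def c_def Ainf_def v_def by (auto simp: indicator_def)
      finally show "ennreal \<bar>f x\<bar> * c x \<le> G x" unfolding G_def c_def v_def
        by (simp add: add_mono)
    qed
    also have "(\<integral>\<^sup>+x. G x \<partial>lebesgue) = ennreal (Y 0) * umeas u E + (\<Sum>k. ennreal (Y (Suc k)) * umeas u (A k)) + top * umeas u Ainf"
      unfolding G_def umeas_def
      by (subst nn_integral_add, measurable, subst nn_integral_add, measurable,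
          simp add: nn_integral_suminf nn_integral_cmult)
    also have "\<dots> \<le> ennreal (Y 0 * r) + (\<Sum>k. ennreal (2 * Nr * 2^m * R * \<alpha>^(Suc k))) + 0"
    proof (intro add_mono)
      show "ennreal (Y 0) * umeas u E \<le> ennreal (Y 0 * r)" using uE Ynn r by (simp add: ennreal_mult)
      show "top * umeas u Ainf \<le> 0" using uAinf by simp
      show "(\<Sum>k. ennreal (Y (Suc k)) * umeas u (A k)) \<le> (\<Sum>k. ennreal (2 * Nr * 2^m * R * \<alpha>^(Suc k)))"
      proof (intro suminf_le summableI)
        fix k
        have "ennreal (Y (Suc k)) * umeas u (A k) \<le> ennreal (Y (Suc k)) * ennreal (tk k)"
          by (intro mult_left_mono uA) auto
        also have "\<dots> = ennreal (Y (Suc k) * tk k)" using Ynn[of "Suc k"] tk[of k] by (simp add: ennreal_mult)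
        also have "\<dots> \<le> ennreal (2 * Nr * 2^m * R * \<alpha>^(Suc k))" using termk by (intro ennreal_leI)
        finally show "ennreal (Y (Suc k)) * umeas u (A k) \<le> ennreal (2 * Nr * 2^m * R * \<alpha>^(Suc k))" .
      qed
    qed
    also have "(\<Sum>k. ennreal (2 * Nr * 2^m * R * \<alpha>^(Suc k))) = ennreal (2 * Nr * 2^m * R * (\<alpha> / (1 - \<alpha>)))"
    proof -
      have sg: "summable (\<lambda>k. \<alpha>^k)" using \<alpha> by (intro summable_geometric) auto
      have "(\<Sum>k. \<alpha>^(Suc k)) = \<alpha> / (1 - \<alpha>)"
        using suminf_mult[OF sg, of \<alpha>] suminf_geometric[of \<alpha>] \<alpha> by (simp add: power_Suc)
      moreover have "summable (\<lambda>k. 2 * Nr * 2^m * R * \<alpha>^(Suc k))"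
        using sg by (intro summable_mult) (simp add: power_Suc summable_mult)
      ultimately show ?thesis
        using \<alpha> Nr R by (subst suminf_ennreal2) (auto simp: suminf_mult)
    qed
    also have "ennreal (Y 0 * r) + ennreal (2 * Nr * 2^m * R * (\<alpha> / (1 - \<alpha>))) + 0 = ennreal Bd"
      unfolding Y0 Bd_def using Nr R \<alpha> by (simp add: ennreal_plus[symmetric] algebra_simps del: ennreal_plus)
    finally show ?thesis .
  qed
  have Bd: "0 \<le> Bd" unfolding Bd_def using \<alpha> Nr R by simp
  have meas: "(\<lambda>x. f x * indicator E x * u x) \<in> borel_measurable lebesgue" by measurable
  have int: "integrable lebesgue (\<lambda>x. f x * indicator E x * u x)"
    using bound by (intro integrableI_bounded meas) (auto simp: top.not_eq_extremum intro: le_less_trans)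
  have "\<bar>\<integral>x. f x * indicator E x * u x \<partial>lebesgue\<bar> \<le> (\<integral>x. \<bar>f x * indicator E x * u x\<bar> \<partial>lebesgue)"
    using int by (intro integral_abs_bound_integral) auto
  also have "\<dots> = enn2real (\<integral>\<^sup>+x. ennreal \<bar>f x * indicator E x * u x\<bar> \<partial>lebesgue)"
    by (intro integral_eq_nn_integral) auto
  also have "\<dots> \<le> Bd" using bound Bd by (intro enn2real_leI) auto
  finally show ?thesis using int unfolding Bd_def \<alpha>_def R_def by simp
qed


lemma rearr_ind_big:
  assumes uE: "umeas u E = ennreal r" and rt: "r \<le> t"
  shows "rearr u (indicator E) t = 0"
proof -
  have "rearr u (indicator E) t \<le> 0"
  proof (rule ennreal_le_epsilon)
    fix e :: real assume e: "0 < e"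
    define y where "y = min e (1/2)"
    have y: "0 < y" "y < 1" "y \<le> e" unfolding y_def using e by auto
    have "{x. \<bar>indicator E x :: real\<bar> > y} = E" using y by (auto simp: indicator_def)
    then have "ennreal y \<in> ennreal ` {y::real. y > 0 \<and> umeas u {x. \<bar>indicator E x :: real\<bar> > y} \<le> ennreal t}"
      using y uE rt by (auto intro!: ennreal_leI)
    then have "rearr u (indicator E) t \<le> ennreal y" unfolding rearr_def by (rule Inf_lower)
    also have "\<dots> \<le> 0 + ennreal e" using y by (simp add: ennreal_leI)
    finally show "rearr u (indicator E) t \<le> 0 + ennreal e" .
  qed
  then show ?thesis by simp
qed

lemma rearr_ind_le1:
  assumes t: "0 < t"
  shows "rearr u (indicator E) t \<le> 1"
proof -
  have "{x. \<bar>indicator E x :: real\<bar> > 1} = {}" by (auto simp: indicator_def)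
  then have "ennreal 1 \<in> ennreal ` {y::real. y > 0 \<and> umeas u {x. \<bar>indicator E x :: real\<bar> > y} \<le> ennreal t}"
    using t by (auto simp: umeas_def)
  then have "rearr u (indicator E) t \<le> ennreal 1" unfolding rearr_def by (rule Inf_lower)
  then show ?thesis by simp
qed

lemma rearr_ind_ge1:
  assumes uE: "umeas u E = ennreal r" and t: "0 < t" "t < r"
  shows "1 \<le> rearr u (indicator E) t"
  unfolding rearr_def
proof (rule Inf_greatest)
  fix z assume "z \<in> ennreal ` {y::real. y > 0 \<and> umeas u {x. \<bar>indicator E x :: real\<bar> > y} \<le> ennreal t}"
  then obtain y where y: "y > 0" "umeas u {x. \<bar>indicator E x :: real\<bar> > y} \<le> ennreal t" "z = ennreal y" by auto
  show "1 \<le> z"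
  proof (rule ccontr)
    assume "\<not> 1 \<le> z"
    then have "y < 1" using y by (auto simp: not_le ennreal_less_iff)
    then have "{x. \<bar>indicator E x :: real\<bar> > y} = E" using y by (auto simp: indicator_def)
    then show False using y uE t by (simp add: ennreal_le_iff)
  qed
qed

lemma lower_ind:
  assumes wu: "weight_R u" and wp: "weight_pos w" and p: "1 < p"
    and Wpos: "\<forall>t>0. 0 < Wfun w t"
    and E: "E \<in> sets lebesgue" and uE: "umeas u E = ennreal r" and r: "0 < r"
  shows "in_lorentz p u w (indicator E)" "lorentz_norm p u w (indicator E) \<noteq> 0"
    "lorentz_norm p u w (indicator E) \<le> ennreal (Wfun w r powr (1/p))"
    "integrable lebesgue (\<lambda>x. indicator E x * indicator E x * u x)"
    "\<bar>\<integral>x. indicator E x * indicator E x * u x \<partial>lebesgue\<bar> = r"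
proof -
  show le: "lorentz_norm p u w (indicator E) \<le> ennreal (Wfun w r powr (1/p))"
    unfolding lorentz_norm_def
  proof (intro SUP_least)
    fix t :: real assume t: "t \<in> {0<..}"
    show "rearr u (indicator E) t * ennreal (Wfun w t powr (1/p)) \<le> ennreal (Wfun w r powr (1/p))"
    proof (cases "r \<le> t")
      case True then show ?thesis using rearr_ind_big[OF uE True] by simp
    next
      case False
      have "rearr u (indicator E) t * ennreal (Wfun w t powr (1/p)) \<le> 1 * ennreal (Wfun w r powr (1/p))"
        using rearr_ind_le1[of t u E] t False W_mono[OF wp, of t r] W_eq(2)[OF wp, of t] p
        by (intro mult_mono ennreal_leI powr_mono2) auto
      then show ?thesis by simp
    qed
  qed
  have "ennreal (Wfun w (r/2) powr (1/p)) \<le> rearr u (indicator E) (r/2) * ennreal (Wfun w (r/2) powr (1/p))"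
    using rearr_ind_ge1[OF uE, of "r/2"] r by (simp add: mult_right_mono[where c="ennreal _", of 1, simplified])
  also have "\<dots> \<le> lorentz_norm p u w (indicator E)"
    unfolding lorentz_norm_def using r by (intro SUP_upper) auto
  finally show "lorentz_norm p u w (indicator E) \<noteq> 0" using Wpos[rule_format, of "r/2"] r by auto
  show "in_lorentz p u w (indicator E)"
    unfolding in_lorentz_def using le E by (auto simp: top.not_eq_extremum intro: le_less_trans)
  have um[measurable]: "u \<in> borel_measurable lebesgue" using wu unfolding weight_R_def by auto
  have uAE: "AE x in lebesgue. 0 < u x" using wu unfolding weight_R_def by auto
  note [measurable] = E
  have nn: "(\<integral>\<^sup>+x. ennreal (indicator E x * indicator E x * u x) \<partial>lebesgue) = ennreal r"
  proof -
    have "(\<integral>\<^sup>+x. ennreal (indicator E x * indicator E x * u x) \<partial>lebesgue) = umeas u E"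
      unfolding umeas_def by (intro nn_integral_cong) (auto simp: indicator_def)
    then show ?thesis using uE by simp
  qed
  have AEnn: "AE x in lebesgue. 0 \<le> indicator E x * indicator E x * u x"
    using uAE by eventually_elim auto
  show int: "integrable lebesgue (\<lambda>x. indicator E x * indicator E x * u x)"
    by (rule integrableI_nn_integral_finite[OF _ AEnn nn]) measurable
  have "(\<integral>x. indicator E x * indicator E x * u x \<partial>lebesgue) = r"
    using integral_eq_nn_integral[OF _ AEnn] nn r by simp
  then show "\<bar>\<integral>x. indicator E x * indicator E x * u x \<partial>lebesgue\<bar> = r" using r by simp
qed


theorem proposition2p6:
  fixes p :: real and u w :: "real \<Rightarrow> real"
  assumes "1 < p"
    and "weight_R u"
    and "weight_pos w"
    and "B_p_infty p w"
  shows "\<exists>C>0. \<forall>E \<in> sets lebesgue. 0 < umeas u E \<and> umeas u E < top \<longrightarrow>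
           (let uE = enn2real (umeas u E); R = uE / (Wfun w uE powr (1/p)) in
              assoc_norm p u w (indicator E) \<le> ennreal (C * R)
            \<and> ennreal R \<le> ennreal C * assoc_norm p u w (indicator E))"
proof -
  note p = assms(1) and wu = assms(2) and wp = assms(3)
  obtain C0 where C0: "C0 > 0" and CC: "\<And>f lam a B. (\<forall>t>0. 0 \<le> f t) \<Longrightarrow> antimono_on {0<..} f \<Longrightarrow> 0 < lam \<Longrightarrow> 0 < a
     \<Longrightarrow> (\<forall>t\<in>{0<..a}. hardyP f t > ennreal lam) \<Longrightarrow> 0 \<le> B
     \<Longrightarrow> (\<integral>\<^sup>+t\<in>{0<..}. ennreal (f t powr p * w t) \<partial>lebesgue) \<le> ennreal B
     \<Longrightarrow> lam * Wfun w a powr (1/p) \<le> C0 * B powr (1/p)"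
    by (rule Bp_use[OF assms(4,3,1)], blast)
  have uEr: "umeas u E = ennreal (enn2real (umeas u E)) \<and> 0 < enn2real (umeas u E)"
    if "0 < umeas u E" "umeas u E < top" for E
    using that by (cases "umeas u E") (auto simp: ennreal_less_iff)
  show ?thesis
  proof (cases "\<exists>b>0. Wfun w b = 0")
    case True
    then obtain b where b: "0 < b" "Wfun w b = 0" by auto
    have W0: "Wfun w a = 0" if "0 < a" for a using W_zero[OF wp p C0 CC b that] .
    have N0: "lorentz_norm p u w f = 0" for f
    proof -
      have "lorentz_norm p u w f \<le> 0" unfolding lorentz_norm_def
        by (intro SUP_least) (auto simp: W0)
      then show ?thesis by simp
    qed
    have A0: "assoc_norm p u w g = 0" for g
      unfolding assoc_norm_def using N0 by (simp add: bot_ennreal)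
    show ?thesis
    proof (intro exI[of _ 1] conjI ballI impI)
      fix E assume E: "E \<in> sets lebesgue" "0 < umeas u E \<and> umeas u E < top"
      then have "0 < enn2real (umeas u E)" using uEr by auto
      then show "let uE = enn2real (umeas u E); R = uE / (Wfun w uE powr (1/p)) in
              assoc_norm p u w (indicator E) \<le> ennreal (1 * R)
            \<and> ennreal R \<le> ennreal 1 * assoc_norm p u w (indicator E)"
        by (simp add: Let_def A0 W0)
    qed simp
  next
    case False
    have Wpos: "\<forall>t>0. 0 < Wfun w t"
    proof (intro allI impI)
      fix t :: real assume t: "0 < t"
      then have "Wfun w t \<noteq> 0" using False by auto
      then show "0 < Wfun w t" using W_eq(2)[OF wp t] by linarith
    qed
    obtain m where m1: "1 \<le> m" and m: "(real m + 1) powr (p - 1) > 2 * (2 powr p)^3 * (C0 powr p)^2"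
      using exists_m[OF p, of "2 * (2 powr p)^3 * (C0 powr p)^2"] by auto
    have idx: "\<forall>s>0. Wfun w (2^m * s) * (2^m * s) powr (-p) \<le> 1/2 * (Wfun w s * s powr (-p))"
      using index_step[OF wp p C0 CC m] by auto
    define \<alpha> :: real where "\<alpha> = 2 powr (-1/p)"
    have \<alpha>: "0 < \<alpha>" "\<alpha> < 1" unfolding \<alpha>_def using p by (auto intro!: powr_less_one)
    define D where "D = 2 + 2 * 2^m * (\<alpha> / (1 - \<alpha>))"
    have D: "1 \<le> D" unfolding D_def using \<alpha> by simp
    show ?thesis
    proof (intro exI[of _ D] conjI ballI impI)
      show "0 < D" using D by simp
      fix E assume E: "E \<in> sets lebesgue" "0 < umeas u E \<and> umeas u E < top"
      define r where "r = enn2real (umeas u E)"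
      have uE: "umeas u E = ennreal r" and r: "0 < r" using uEr E unfolding r_def by auto
      define R where "R = r / (Wfun w r powr (1/p))"
      have R: "0 < R" unfolding R_def using Wpos r by auto
      have up: "assoc_norm p u w (indicator E) \<le> ennreal (D * R)"
        unfolding assoc_norm_def
      proof (intro SUP_least)
        fix f assume "f \<in> {f. in_lorentz p u w f \<and> lorentz_norm p u w f \<noteq> 0}"
        then have f: "f \<in> borel_measurable lebesgue" "lorentz_norm p u w f < top" "lorentz_norm p u w f \<noteq> 0"
          unfolding in_lorentz_def by auto
        then obtain Nr where Nf: "lorentz_norm p u w f = ennreal Nr" and Nr: "0 < Nr"
          by (cases "lorentz_norm p u w f") (auto simp: ennreal_less_iff)
        have res: "integrable lebesgue (\<lambda>x. f x * indicator E x * u x) \<and>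
           \<bar>\<integral>x. f x * indicator E x * u x \<partial>lebesgue\<bar> \<le> D * Nr * R"
          using upper_main[OF wu wp p Wpos idx m1 E(1) uE r f(1) Nf Nr] unfolding D_def \<alpha>_def R_def by simp
        have "ennreal \<bar>\<integral>x. f x * indicator E x * u x \<partial>lebesgue\<bar> / ennreal Nr
              = ennreal (\<bar>\<integral>x. f x * indicator E x * u x \<partial>lebesgue\<bar> / Nr)"
          using Nr by (simp add: divide_ennreal)
        also have "\<dots> \<le> ennreal (D * R)"
          using res Nr by (intro ennreal_leI) (simp add: field_simps)
        finally show "(if integrable lebesgue (\<lambda>x. f x * indicator E x * u x)
             then ennreal \<bar>\<integral>x. f x * indicator E x * u x \<partial>lebesgue\<bar> / lorentz_norm p u w f
             else top) \<le> ennreal (D * R)"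
          using res Nf by simp
      qed
      have lo: "ennreal R \<le> assoc_norm p u w (indicator E)"
      proof -
        note L = lower_ind[OF wu wp p Wpos E(1) uE r]
        obtain n where n: "lorentz_norm p u w (indicator E) = ennreal n" "0 < n"
          using L(2,3) by (cases "lorentz_norm p u w (indicator E)") (auto simp: ennreal_less_iff top_unique)
        have nle: "n \<le> Wfun w r powr (1/p)" using L(3) n by (simp add: ennreal_le_iff)
        have "ennreal R \<le> ennreal (r / n)"
          unfolding R_def using r n nle by (intro ennreal_leI divide_left_mono) (auto intro!: mult_pos_pos)
        also have "\<dots> = ennreal r / lorentz_norm p u w (indicator E)"
          using n r by (simp add: divide_ennreal)
        also have "\<dots> = (if integrable lebesgue (\<lambda>x. indicator E x * indicator E x * u x)
             then ennreal \<bar>\<integral>x. indicator E x * indicator E x * u x \<partial>lebesgue\<bar> / lorentz_norm p u w (indicator E)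
             else top)"
          using L(4,5) by simp
        also have "\<dots> \<le> assoc_norm p u w (indicator E)"
          unfolding assoc_norm_def using L(1,2) by (intro SUP_upper) auto
        finally show ?thesis .
      qed
      have "ennreal R \<le> ennreal D * assoc_norm p u w (indicator E)"
      proof -
        have "assoc_norm p u w (indicator E) = 1 * assoc_norm p u w (indicator E)" by simp
        also have "\<dots> \<le> ennreal D * assoc_norm p u w (indicator E)"
          using D by (intro mult_right_mono) (auto simp: ennreal_ge_1)
        finally show ?thesis using lo by (rule order_trans[rotated])
      qed
      then show "let uE = enn2real (umeas u E); R = uE / (Wfun w uE powr (1/p)) in
              assoc_norm p u w (indicator E) \<le> ennreal (D * R)
            \<and> ennreal R \<le> ennreal D * assoc_norm p u w (indicator E)"
        using up unfolding Let_def r_def[symmetric] R_def[symmetric] by simp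
    qed
  qed
qed

end
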